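(* Let $C=\mathbb{S}^1\times\mathbb{R}$ be the flat Euclidean cylinder, with $\mathbb{S}^1=\mathbb{R}/\mathbb{Z}$, and let $f:C\to C$ be a geodesic-preserving bijection. Then $f$ is a composition of an isometry of $C$, an affine map in the $\mathbb{R}$-coordinate, and a twisting map.
   Context: $C$ carries the product of the standard flat metric on $\mathbb{R}/\mathbb{Z}$ and the standard metric on $\mathbb{R}$. A geodesic is the image of a locally isometric immersion of the whole real line; a bijection (not assumed continuous) is geodesic-preserving if it maps every geodesic onto a geodesic as a set. An affine map in the $\mathbb{R}$-coordinate is $(r_1,r_2)\mapsto(r_1,ar_2+b)$ with $a\neq 0$. For $\alpha\in\mathbb{R}$ the twisting map is $t_\alpha(r_1,r_2)=(r_1+\alpha r_2,\,r_2)$. *)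

theory Defs
  imports "HOL-Analysis.Analysis"
begin

text \<open>The flat cylinder C = (R/Z) x R, represented by the fundamental domain [0,1) x R.\<close>

typedef cyl = "{p :: real \<times> real. 0 \<le> fst p \<and> fst p < 1}"
  by (rule exI[of _ "(0,0)"]) simp

definition cpt :: "real \<Rightarrow> real \<Rightarrow> cyl" where
  "cpt r1 r2 = Abs_cyl (frac r1, r2)"

definition cx :: "cyl \<Rightarrow> real" where "cx p = fst (Rep_cyl p)"
definition cy :: "cyl \<Rightarrow> real" where "cy p = snd (Rep_cyl p)"

definition cdist :: "cyl \<Rightarrow> cyl \<Rightarrow> real" where
  "cdist p q = (INF k::int. dist (cx p, cy p) (cx q + of_int k, cy q))"

definition loc_isom_immersion :: "(real \<Rightarrow> cyl) \<Rightarrow> bool" where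
  "loc_isom_immersion \<gamma> \<longleftrightarrow>
     (\<forall>t. \<exists>e>0. \<forall>s\<in>ball t e. \<forall>s'\<in>ball t e. cdist (\<gamma> s) (\<gamma> s') = dist s s')"

definition geodesic :: "cyl set \<Rightarrow> bool" where
  "geodesic G \<longleftrightarrow> (\<exists>\<gamma>. loc_isom_immersion \<gamma> \<and> range \<gamma> = G)"

definition geodesic_preserving :: "(cyl \<Rightarrow> cyl) \<Rightarrow> bool" where
  "geodesic_preserving f \<longleftrightarrow> bij f \<and> (\<forall>G. geodesic G \<longrightarrow> geodesic (f ` G))"

definition cyl_isometry :: "(cyl \<Rightarrow> cyl) \<Rightarrow> bool" where
  "cyl_isometry g \<longleftrightarrow> bij g \<and> (\<forall>p q. cdist (g p) (g q) = cdist p q)"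

definition affine_R :: "real \<Rightarrow> real \<Rightarrow> cyl \<Rightarrow> cyl" where
  "affine_R a b p = cpt (cx p) (a * cy p + b)"

definition twist :: "real \<Rightarrow> cyl \<Rightarrow> cyl" where
  "twist \<alpha> p = cpt (cx p + \<alpha> * cy p) (cy p)"

end

theory Submission
  imports Defs
begin

lemma frac_diff_Ints: "frac u - u \<in> \<int>"
  by (simp add: frac_def)

lemma frac_eq_iff_Ints: "frac u = frac u' \<longleftrightarrow> u - u' \<in> \<int>"
proof
  assume "frac u = frac u'"
  then have "u - u' = of_int (floor u - floor u')" by (simp add: frac_def)
  then show "u - u' \<in> \<int>" by simp
next
  assume "u - u' \<in> \<int>"
  then obtain k where "u - u' = of_int k" by (auto elim: Ints_cases)
  then have "u = u' + of_int k" by simp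
  then show "frac u = frac u'" by simp
qed

lemma cx_cpt [simp]: "cx (cpt u v) = frac u"
  unfolding cx_def cpt_def
  by (subst Abs_cyl_inverse) (auto simp: frac_lt_1)

lemma cy_cpt [simp]: "cy (cpt u v) = v"
  unfolding cy_def cpt_def
  by (subst Abs_cyl_inverse) (auto simp: frac_lt_1)

lemma cx_range: "0 \<le> cx p \<and> cx p < 1"
  unfolding cx_def using Rep_cyl[of p] by auto

lemma cpt_cx_cy [simp]: "cpt (cx p) (cy p) = p"
proof -
  have "frac (cx p) = cx p" using cx_range[of p] by (simp add: frac_eq)
  then show ?thesis unfolding cpt_def cx_def cy_def
    by (simp add: Rep_cyl_inverse)
qed

lemma cyl_eq_iff: "p = q \<longleftrightarrow> cx p = cx q \<and> cy p = cy q"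
  by (metis cpt_cx_cy)

lemma cpt_eq_iff: "cpt u v = cpt u' v' \<longleftrightarrow> u - u' \<in> \<int> \<and> v = v'"
  by (simp add: cyl_eq_iff frac_eq_iff_Ints)

lemma cpt_eqI: "u - u' \<in> \<int> \<Longrightarrow> v = v' \<Longrightarrow> cpt u v = cpt u' v'"
  by (simp add: cpt_eq_iff)

definition dn :: "real \<Rightarrow> real" where "dn x = \<bar>x - of_int (round x)\<bar>"

lemma dn_le: "dn x \<le> \<bar>x - of_int k\<bar>"
  unfolding dn_def by (rule round_diff_minimal)

lemma dn_le_abs: "dn x \<le> \<bar>x\<bar>"
  using dn_le[of x 0] by simp

lemma dn_nonneg: "dn x \<ge> 0" by (simp add: dn_def)

lemma dn_le_half: "dn x \<le> 1/2"
  unfolding dn_def using of_int_round_abs_le[of x] by (simp add: abs_minus_commute)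

lemma dn_shift: "x - y \<in> \<int> \<Longrightarrow> dn x = dn y"
proof -
  assume "x - y \<in> \<int>"
  then obtain k where k: "x = y + of_int k" by (metis Ints_cases add_diff_cancel_left' add_diff_eq diff_add_cancel)
  have "dn x \<le> dn y"
    using dn_le[of x "round y + k"] unfolding dn_def k by (simp add: algebra_simps)
  moreover have "dn y \<le> dn x"
    using dn_le[of y "round x - k"] unfolding dn_def k by (simp add: algebra_simps)
  ultimately show ?thesis by simp
qed

lemma dn_minus: "dn (- x) = dn x"
proof -
  have "dn (-x) \<le> dn x" using dn_le[of "-x" "- round x"] unfolding dn_def by (simp add: abs_minus_commute)
  moreover have "dn x \<le> dn (-x)" using dn_le[of "x" "- round (-x)"] unfolding dn_def
    by (metis abs_minus_commute add.inverse_inverse diff_minus_eq_add minus_diff_eq of_int_minus uminus_add_conv_diff)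
  ultimately show ?thesis by simp
qed

lemma dn_small: "\<bar>x\<bar> \<le> 1/2 \<Longrightarrow> dn x = \<bar>x\<bar>"
proof -
  assume a: "\<bar>x\<bar> \<le> 1/2"
  have "\<bar>x\<bar> \<le> \<bar>x - of_int k\<bar>" for k :: int
  proof (cases "k = 0")
    case False
    then have "\<bar>of_int k :: real\<bar> \<ge> 1" by (metis Ints_nonzero_abs_ge1 Ints_of_int of_int_eq_0_iff)
    then show ?thesis using a by linarith
  qed simp
  then have "\<bar>x\<bar> \<le> dn x" unfolding dn_def by blast
  then show ?thesis using dn_le_abs[of x] by simp
qed

lemma cdist_formula: "cdist p q = sqrt ((dn (cx p - cx q))\<^sup>2 + (cy p - cy q)\<^sup>2)"
proof -
  let ?d = "cx p - cx q" and ?e = "cy p - cy q"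
  have eq: "dist (cx p, cy p) (cx q + of_int k, cy q) = sqrt ((?d - of_int k)\<^sup>2 + ?e\<^sup>2)" for k :: int
    by (simp add: dist_Pair_Pair dist_real_def power2_abs algebra_simps)
  have lb: "sqrt ((dn ?d)\<^sup>2 + ?e\<^sup>2) \<le> sqrt ((?d - of_int k)\<^sup>2 + ?e\<^sup>2)" for k :: int
  proof -
    have "dn ?d \<le> \<bar>?d - of_int k\<bar>" by (rule dn_le)
    then have "(dn ?d)\<^sup>2 \<le> (?d - of_int k)\<^sup>2"
      by (metis abs_le_square_iff abs_of_nonneg dn_nonneg)
    then show ?thesis by simp
  qed
  have at: "sqrt ((dn ?d)\<^sup>2 + ?e\<^sup>2) = sqrt ((?d - of_int (round ?d))\<^sup>2 + ?e\<^sup>2)"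
    unfolding dn_def by (simp add: power2_abs)
  show ?thesis unfolding cdist_def eq
  proof (rule antisym)
    show "(INF k. sqrt ((?d - of_int k)\<^sup>2 + ?e\<^sup>2)) \<le> sqrt ((dn ?d)\<^sup>2 + ?e\<^sup>2)"
      unfolding at by (rule cINF_lower) (auto intro: bdd_belowI2[where m=0])
  next
    show "sqrt ((dn ?d)\<^sup>2 + ?e\<^sup>2) \<le> (INF k. sqrt ((?d - of_int k)\<^sup>2 + ?e\<^sup>2))"
      by (rule cINF_greatest) (use lb in auto)
  qed
qed

lemma cdist_cpt: "cdist (cpt u v) (cpt u' v') = sqrt ((dn (u - u'))\<^sup>2 + (v - v')\<^sup>2)"
proof -
  have "dn (frac u - frac u') = dn (u - u')"
  proof (rule dn_shift)
    have "(frac u - u) - (frac u' - u') \<in> \<int>" by (intro Ints_diff frac_diff_Ints)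
    moreover have "(frac u - u) - (frac u' - u') = frac u - frac u' - (u - u')" by simp
    ultimately show "frac u - frac u' - (u - u') \<in> \<int>" by simp
  qed
  then show ?thesis by (simp add: cdist_formula)
qed


lemma iso_alg:
  fixes p q P Q \<sigma> \<tau> :: real
  assumes "p\<^sup>2 + q\<^sup>2 = \<sigma>\<^sup>2" "P\<^sup>2 + Q\<^sup>2 = \<tau>\<^sup>2" "(p - P)\<^sup>2 + (q - Q)\<^sup>2 = (\<sigma> - \<tau>)\<^sup>2"
  shows "p * \<tau> = \<sigma> * P \<and> q * \<tau> = \<sigma> * Q"
proof -
  have h: "p * P + q * Q = \<sigma> * \<tau>"
    using assms unfolding power2_diff by linarith
  have "(p * \<tau> - \<sigma> * P)\<^sup>2 + (q * \<tau> - \<sigma> * Q)\<^sup>2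
      = \<tau>\<^sup>2 * (p\<^sup>2 + q\<^sup>2) - 2 * \<sigma> * \<tau> * (p * P + q * Q) + \<sigma>\<^sup>2 * (P\<^sup>2 + Q\<^sup>2)"
    by (simp add: power2_eq_square algebra_simps)
  also have "\<dots> = 0" unfolding h assms(1,2) by (simp add: power2_eq_square algebra_simps)
  finally show ?thesis by (simp add: sum_power2_eq_zero_iff)
qed


lemma sqrt_eq_abs_sq: "A \<ge> 0 \<Longrightarrow> sqrt A = \<bar>d\<bar> \<Longrightarrow> A = (d::real)\<^sup>2"
  by (metis abs_of_nonneg power2_abs real_sqrt_pow2)

lemma local_line:
  fixes X Y :: "real \<Rightarrow> real"
  assumes iso: "\<And>s s'. s \<in> ball t e0 \<Longrightarrow> s' \<in> ball t e0 \<Longrightarrow>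
     sqrt ((dn (X s - X s'))\<^sup>2 + (Y s - Y s')\<^sup>2) = dist s s'"
    and e0: "e0 > 0"
  shows "\<exists>e>0. \<exists>a b. a\<^sup>2 + b\<^sup>2 = 1 \<and> (\<forall>s\<in>ball t e. Y s = Y t + b * (s - t) \<and> X s - X t - a * (s - t) \<in> \<int>)"
proof -
  define e where "e = min e0 (1/4)"
  have e: "e > 0" "e \<le> e0" "e \<le> 1/4" using e0 by (auto simp: e_def)
  have iso1: "(dn (X s - X s'))\<^sup>2 + (Y s - Y s')\<^sup>2 = (s - s')\<^sup>2" if "s \<in> ball t e" "s' \<in> ball t e" for s s'
  proof -
    have "sqrt ((dn (X s - X s'))\<^sup>2 + (Y s - Y s')\<^sup>2) = \<bar>s - s'\<bar>"
      using iso[of s s'] that e by (auto simp: dist_real_def)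
    then show ?thesis by (rule sqrt_eq_abs_sq[rotated]) simp
  qed
  define l where "l s = (X s - X t) - of_int (round (X s - X t))" for s
  have l_abs: "\<bar>l s\<bar> = dn (X s - X t)" for s unfolding l_def dn_def by simp
  have l_bound: "\<bar>l s\<bar> < 1/4" if "s \<in> ball t e" for s
  proof -
    have t: "t \<in> ball t e" using e by simp
    have "(dn (X s - X t))\<^sup>2 \<le> (s - t)\<^sup>2" using iso1[OF that t] by (metis le_add_same_cancel1 zero_le_power2)
    then have "dn (X s - X t) \<le> \<bar>s - t\<bar>" using dn_nonneg by (metis abs_of_nonneg real_le_rsqrt real_sqrt_abs)
    moreover have "\<bar>s - t\<bar> < 1/4" using that e by (auto simp: dist_real_def abs_minus_commute)
    ultimately show ?thesis using l_abs by simp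
  qed
  have l_int: "(X s - X s') - (l s - l s') \<in> \<int>" for s s'
    unfolding l_def by (simp add: algebra_simps)
  have iso2: "(l s - l s')\<^sup>2 + (Y s - Y s')\<^sup>2 = (s - s')\<^sup>2" if "s \<in> ball t e" "s' \<in> ball t e" for s s'
  proof -
    have "dn (X s - X s') = dn (l s - l s')" by (rule dn_shift) (rule l_int)
    also have "\<dots> = \<bar>l s - l s'\<bar>" by (rule dn_small) (use l_bound[OF that(1)] l_bound[OF that(2)] in linarith)
    finally show ?thesis using iso1[OF that] by (simp add: power2_abs)
  qed
  have lt: "l t = 0" unfolding l_def by simp
  define s1 where "s1 = t + e/2"
  define \<tau> where "\<tau> = e/2"
  have s1: "s1 \<in> ball t e" "t \<in> ball t e" using e by (auto simp: s1_def dist_real_def)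
  have tau: "\<tau> \<noteq> 0" "s1 - t = \<tau>" using e by (auto simp: \<tau>_def s1_def)
  define a where "a = l s1 / \<tau>"
  define b where "b = (Y s1 - Y t) / \<tau>"
  have ab: "a\<^sup>2 + b\<^sup>2 = 1"
  proof -
    have "(l s1)\<^sup>2 + (Y s1 - Y t)\<^sup>2 = \<tau>\<^sup>2" using iso2[OF s1] lt tau by simp
    then have "(l s1 / \<tau>)\<^sup>2 + ((Y s1 - Y t)/\<tau>)\<^sup>2 = 1" using tau
      by (simp add: power_divide add_divide_distrib[symmetric])
    then show ?thesis by (simp add: a_def b_def)
  qed
  have main: "Y s = Y t + b * (s - t) \<and> X s - X t - a * (s - t) \<in> \<int>" if s: "s \<in> ball t e" for s
  proof -
    have h1: "(l s)\<^sup>2 + (Y s - Y t)\<^sup>2 = (s - t)\<^sup>2" using iso2[OF s s1(2)] lt by simp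
    have h2: "(l s1)\<^sup>2 + (Y s1 - Y t)\<^sup>2 = \<tau>\<^sup>2" using iso2[OF s1] lt tau by simp
    have h3: "(l s - l s1)\<^sup>2 + ((Y s - Y t) - (Y s1 - Y t))\<^sup>2 = ((s - t) - \<tau>)\<^sup>2"
      using iso2[OF s s1(1)] tau by (simp add: algebra_simps)
    from iso_alg[OF h1 h2 h3] have
      c1: "l s * \<tau> = (s - t) * l s1" and c2: "(Y s - Y t) * \<tau> = (s - t) * (Y s1 - Y t)" by auto
    have "l s = a * (s - t)" using c1 tau unfolding a_def by (simp add: field_simps)
    moreover have "Y s - Y t = b * (s - t)" using c2 tau unfolding b_def by (simp add: field_simps)
    moreover have "X s - X t - l s \<in> \<int>" unfolding l_def by simp
    ultimately show ?thesis by (metis add_diff_cancel_left' diff_add_cancel)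
  qed
  show ?thesis using e ab main by blast
qed


lemma loc_const_real:
  fixes f :: "real \<Rightarrow> 'a"
  assumes "\<And>t. \<exists>e>0. \<forall>s\<in>ball t e. f s = f t"
  shows "f s = f t"
proof -
  have "\<forall>a\<in>UNIV. eventually (\<lambda>b. f a = f b) (at a within UNIV)"
  proof
    fix a :: real
    obtain e where "e > 0" "\<forall>s\<in>ball a e. f s = f a" using assms by blast
    then show "eventually (\<lambda>b. f a = f b) (at a within UNIV)"
      unfolding eventually_at by (metis dist_commute mem_ball)
  qed
  from connected_local_const[OF connected_UNIV UNIV_I UNIV_I this] show ?thesis by metis
qed

lemma Ints_small_mult:
  fixes m r :: real
  assumes "r > 0" "\<And>d. 0 < d \<Longrightarrow> d < r \<Longrightarrow> m * d \<in> \<int>"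
  shows "m = 0"
proof (rule ccontr)
  assume m: "m \<noteq> 0"
  define d where "d = min (r/2) (1 / (2 * \<bar>m\<bar>))"
  have d: "0 < d" "d < r" "d \<le> 1 / (2 * \<bar>m\<bar>)" using assms(1) m by (auto simp: d_def)
  have "\<bar>m * d\<bar> = \<bar>m\<bar> * d" using d by (simp add: abs_mult)
  also have "\<dots> \<le> \<bar>m\<bar> * (1 / (2 * \<bar>m\<bar>))" using d by (intro mult_left_mono) auto
  also have "\<dots> = 1/2" using m by simp
  finally have "\<bar>m * d\<bar> < 1" by simp
  with assms(2)[OF d(1,2)] have "m * d = 0" by (rule Ints_nonzero_abs_less1)
  with m d show False by simp
qed

lemma geodesic_line:
  assumes "loc_isom_immersion \<gamma>"
  shows "\<exists>x0 y0 a b. a\<^sup>2 + b\<^sup>2 = 1 \<and> (\<forall>s. \<gamma> s = cpt (x0 + a * s) (y0 + b * s))"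
proof -
  define X where "X s = cx (\<gamma> s)" for s
  define Y where "Y s = cy (\<gamma> s)" for s
  have geq: "\<gamma> s = cpt (X s) (Y s)" for s unfolding X_def Y_def by simp
  have loc: "\<exists>e>0. \<exists>a b. a\<^sup>2 + b\<^sup>2 = 1 \<and> (\<forall>s\<in>ball t e. Y s = Y t + b * (s - t) \<and> X s - X t - a * (s - t) \<in> \<int>)" for t
  proof -
    obtain e0 where e0: "e0 > 0" "\<forall>s\<in>ball t e0. \<forall>s'\<in>ball t e0. cdist (\<gamma> s) (\<gamma> s') = dist s s'"
      using assms unfolding loc_isom_immersion_def by blast
    show ?thesis
    proof (rule local_line[OF _ e0(1)])
      fix s s' assume "s \<in> ball t e0" "s' \<in> ball t e0"
      then show "sqrt ((dn (X s - X s'))\<^sup>2 + (Y s - Y s')\<^sup>2) = dist s s'"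
        using e0(2) unfolding X_def Y_def cdist_formula by blast
    qed
  qed
  then obtain E AA BB where EAB: "\<And>t. E t > 0 \<and> (AA t)\<^sup>2 + (BB t)\<^sup>2 = 1 \<and>
      (\<forall>s\<in>ball t (E t). Y s = Y t + BB t * (s - t) \<and> X s - X t - AA t * (s - t) \<in> \<int>)"
    by metis
  have lc: "(AA t', BB t') = (AA t, BB t)" if t': "t' \<in> ball t (E t)" for t t'
  proof -
    define r where "r = min (E t - dist t t') (E t')"
    have r: "r > 0" using t' EAB[of t'] by (auto simp: r_def)
    have inb: "s \<in> ball t (E t) \<and> s \<in> ball t' (E t')" if "dist t' s < r" for s
      using that dist_triangle[of t s t'] by (auto simp: r_def)
    have t'b: "t' \<in> ball t (E t)" "t' \<in> ball t' (E t')" using t' EAB[of t'] by auto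
    have Yt': "Y t' = Y t + BB t * (t' - t)" using EAB[of t] t'b by blast
    have Xt': "X t' - X t - AA t * (t' - t) \<in> \<int>" using EAB[of t] t'b by blast
    have Bq: "BB t * d = BB t' * d" and Aq: "(AA t' - AA t) * d \<in> \<int>" if d: "0 < d" "d < r" for d
    proof -
      have sb: "t' + d \<in> ball t (E t)" "t' + d \<in> ball t' (E t')" using inb[of "t' + d"] d by (auto simp: dist_real_def)
      have Y1: "Y (t' + d) = Y t + BB t * (t' + d - t)" using EAB[of t] sb by blast
      have Y2: "Y (t' + d) = Y t' + BB t' * (t' + d - t')" using EAB[of t'] sb by blast
      show "BB t * d = BB t' * d" using Y1 Y2 Yt' by (simp add: algebra_simps)
      have X1: "X (t' + d) - X t - AA t * (t' + d - t) \<in> \<int>" using EAB[of t] sb by blast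
      have X2: "X (t' + d) - X t' - AA t' * (t' + d - t') \<in> \<int>" using EAB[of t'] sb by blast
      have "(X (t' + d) - X t - AA t * (t' + d - t)) - (X (t' + d) - X t' - AA t' * (t' + d - t'))
            - (X t' - X t - AA t * (t' - t)) \<in> \<int>"
        using X1 X2 Xt' by (rule Ints_diff[OF Ints_diff])
      moreover have "(X (t' + d) - X t - AA t * (t' + d - t)) - (X (t' + d) - X t' - AA t' * (t' + d - t'))
            - (X t' - X t - AA t * (t' - t)) = (AA t' - AA t) * d" by (simp add: algebra_simps)
      ultimately show "(AA t' - AA t) * d \<in> \<int>" by simp
    qed
    have "BB t = BB t'" using Bq[of "r/2"] r by simp
    moreover have "AA t' - AA t = 0" by (rule Ints_small_mult[OF r Aq])
    ultimately show ?thesis by simp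
  qed
  have ABc: "(AA t, BB t) = (AA 0, BB 0)" for t
  proof (rule loc_const_real)
    fix t
    show "\<exists>e>0. \<forall>s\<in>ball t e. (AA s, BB s) = (AA t, BB t)"
      using lc[of _ t] EAB[of t] by blast
  qed
  define a where "a = AA 0"
  define b where "b = BB 0"
  have ab: "a\<^sup>2 + b\<^sup>2 = 1" using EAB[of 0] by (simp add: a_def b_def)
  have AB: "AA t = a" "BB t = b" for t using ABc[of t] by (auto simp: a_def b_def)
  define \<psi> where "\<psi> s = (Y s - b * s, frac (X s - a * s))" for s
  have "\<psi> s = \<psi> t" if "s \<in> ball t (E t)" for s t
  proof -
    have "Y s = Y t + BB t * (s - t) \<and> X s - X t - AA t * (s - t) \<in> \<int>" using EAB[of t] that by blast
    then have h: "Y s = Y t + b * (s - t)" "X s - X t - a * (s - t) \<in> \<int>" unfolding AB by auto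
    have "(X s - a * s) - (X t - a * t) \<in> \<int>" using h(2) by (simp add: algebra_simps)
    then show ?thesis unfolding \<psi>_def using h(1) by (simp add: frac_eq_iff_Ints algebra_simps)
  qed
  then have \<psi>c: "\<psi> s = \<psi> 0" for s
  proof (intro loc_const_real)
    fix t
    assume h: "\<And>s t. s \<in> ball t (E t) \<Longrightarrow> \<psi> s = \<psi> t"
    show "\<exists>e>0. \<forall>s\<in>ball t e. \<psi> s = \<psi> t" using h[of _ t] EAB[of t] by blast
  qed
  have "\<gamma> s = cpt (X 0 + a * s) (Y 0 + b * s)" for s
  proof -
    have "Y s = Y 0 + b * s" "frac (X s - a * s) = frac (X 0)" using \<psi>c[of s] by (auto simp: \<psi>_def)
    then show ?thesis unfolding geq by (auto intro!: cpt_eqI simp: frac_eq_iff_Ints algebra_simps)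
  qed
  then show ?thesis using ab by blast
qed


definition Circ :: "real \<Rightarrow> cyl set" where "Circ y = {p. cy p = y}"
definition Hel :: "real \<Rightarrow> real \<Rightarrow> cyl set" where "Hel x c = {p. cx p - x - c * cy p \<in> \<int>}"

lemma Ints_shift: "a - b \<in> \<int> \<Longrightarrow> (a::real) \<in> \<int> \<longleftrightarrow> b \<in> \<int>"
proof -
  assume h: "a - b \<in> \<int>"
  show ?thesis
  proof
    assume "a \<in> \<int>"
    then have "a - (a - b) \<in> \<int>" using h by (rule Ints_diff)
    then show "b \<in> \<int>" by simp
  next
    assume "b \<in> \<int>"
    with h have "(a - b) + b \<in> \<int>" by (rule Ints_add)
    then show "a \<in> \<int>" by simp
  qed
qed

lemma Ints_neg_iff: "- (a::real) \<in> \<int> \<longleftrightarrow> a \<in> \<int>"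
  using Ints_minus[of "-a"] Ints_minus[of a] by auto

lemma mem_Hel_cpt: "cpt u v \<in> Hel x c \<longleftrightarrow> u - x - c * v \<in> \<int>"
proof -
  have "(frac u - x - c * v) - (u - x - c * v) \<in> \<int>" using frac_diff_Ints[of u] by simp
  from Ints_shift[OF this] show ?thesis unfolding Hel_def by simp
qed

lemma mem_Hel: "p \<in> Hel x c \<longleftrightarrow> cx p - x - c * cy p \<in> \<int>"
  by (simp add: Hel_def)

lemma mem_Circ: "p \<in> Circ y \<longleftrightarrow> cy p = y"
  by (simp add: Circ_def)

lemma line_loc_isom:
  assumes "a\<^sup>2 + b\<^sup>2 = 1"
  shows "loc_isom_immersion (\<lambda>s. cpt (x0 + a * s) (y0 + b * s))"
  unfolding loc_isom_immersion_def
proof (intro allI exI[of _ "1/4"] conjI ballI)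
  fix t s s' :: real
  assume "s \<in> ball t (1/4)" "s' \<in> ball t (1/4)"
  then have d: "\<bar>s - s'\<bar> \<le> 1/2" unfolding mem_ball dist_real_def by arith
  have "a\<^sup>2 \<le> 1" using assms zero_le_power2[of b] by linarith
  then have a1: "\<bar>a\<bar> \<le> 1" by (simp add: abs_square_le_1)
  have "\<bar>a * (s - s')\<bar> \<le> \<bar>s - s'\<bar>" using a1 by (simp add: abs_mult mult_left_le_one_le)
  then have dn: "dn (a * (s - s')) = \<bar>a * (s - s')\<bar>" using d by (intro dn_small) simp
  have "cdist (cpt (x0 + a * s) (y0 + b * s)) (cpt (x0 + a * s') (y0 + b * s'))
      = sqrt ((dn (a * (s - s')))\<^sup>2 + (b * (s - s'))\<^sup>2)"
    unfolding cdist_cpt by (simp add: algebra_simps)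
  also have "\<dots> = sqrt ((a\<^sup>2 + b\<^sup>2) * (s - s')\<^sup>2)" unfolding dn
    by (simp add: power2_abs power_mult_distrib distrib_right)
  also have "\<dots> = dist s s'" using assms by (simp add: dist_real_def)
  finally show "cdist (cpt (x0 + a * s) (y0 + b * s)) (cpt (x0 + a * s') (y0 + b * s')) = dist s s'" .
qed simp

lemma range_line_Hel:
  assumes "b \<noteq> 0"
  shows "range (\<lambda>s. cpt (x0 + a * s) (y0 + b * s)) = Hel (x0 - a * y0 / b) (a / b)"
proof (intro equalityI subsetI)
  fix p assume "p \<in> range (\<lambda>s. cpt (x0 + a * s) (y0 + b * s))"
  then obtain s where p: "p = cpt (x0 + a * s) (y0 + b * s)" by blast
  have "x0 + a * s - (x0 - a * y0 / b) - a / b * (y0 + b * s) = 0"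
    using assms by (simp add: field_simps)
  then show "p \<in> Hel (x0 - a * y0 / b) (a / b)" unfolding p mem_Hel_cpt by simp
next
  fix p assume "p \<in> Hel (x0 - a * y0 / b) (a / b)"
  then have h: "cx p - (x0 - a * y0 / b) - a / b * cy p \<in> \<int>" by (simp add: mem_Hel)
  define s where "s = (cy p - y0) / b"
  have eq: "(x0 + a * s) - cx p = - (cx p - (x0 - a * y0 / b) - a / b * cy p)"
    using assms by (simp add: s_def field_simps)
  have "(x0 + a * s) - cx p \<in> \<int>" by (subst eq) (rule Ints_minus[OF h])
  moreover have "y0 + b * s = cy p" using assms by (simp add: s_def)
  ultimately have "cpt (x0 + a * s) (y0 + b * s) = cpt (cx p) (cy p)"
    by (intro cpt_eqI)
  then have "p = (\<lambda>s. cpt (x0 + a * s) (y0 + b * s)) s" by simp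
  then show "p \<in> range (\<lambda>s. cpt (x0 + a * s) (y0 + b * s))" by (rule range_eqI)
qed

lemma range_line_Circ:
  assumes "a \<noteq> 0"
  shows "range (\<lambda>s. cpt (x0 + a * s) (y0 + 0 * s)) = Circ y0"
proof (intro equalityI subsetI)
  fix p assume "p \<in> range (\<lambda>s. cpt (x0 + a * s) (y0 + 0 * s))"
  then show "p \<in> Circ y0" by (auto simp: mem_Circ)
next
  fix p assume "p \<in> Circ y0"
  then have cy: "cy p = y0" by (simp add: mem_Circ)
  define s where "s = (cx p - x0) / a"
  have "x0 + a * s = cx p" using assms by (simp add: s_def)
  then have "cpt (x0 + a * s) (y0 + 0 * s) = cpt (cx p) (cy p)"
    using cy by simp
  then have "p = (\<lambda>s. cpt (x0 + a * s) (y0 + 0 * s)) s" by simp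
  then show "p \<in> range (\<lambda>s. cpt (x0 + a * s) (y0 + 0 * s))" by (rule range_eqI)
qed

lemma geodesic_iff: "geodesic G \<longleftrightarrow> (\<exists>y. G = Circ y) \<or> (\<exists>x c. G = Hel x c)"
proof
  assume "geodesic G"
  then obtain \<gamma> where g: "loc_isom_immersion \<gamma>" "range \<gamma> = G" unfolding geodesic_def by blast
  obtain x0 y0 a b where ab: "a\<^sup>2 + b\<^sup>2 = 1" "\<And>s. \<gamma> s = cpt (x0 + a * s) (y0 + b * s)"
    using geodesic_line[OF g(1)] by blast
  have geq: "\<gamma> = (\<lambda>s. cpt (x0 + a * s) (y0 + b * s))" using ab(2) by auto
  show "(\<exists>y. G = Circ y) \<or> (\<exists>x c. G = Hel x c)"
  proof (cases "b = 0")
    case True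
    then have "a \<noteq> 0" using ab(1) by auto
    then have "G = Circ y0" using range_line_Circ[of a x0 y0] g(2) geq True by simp
    then show ?thesis by blast
  next
    case False
    then have "G = Hel (x0 - a * y0 / b) (a / b)" using range_line_Hel[of b x0 a y0] g(2) geq by simp
    then show ?thesis by blast
  qed
next
  assume "(\<exists>y. G = Circ y) \<or> (\<exists>x c. G = Hel x c)"
  then show "geodesic G"
  proof
    assume "\<exists>y. G = Circ y"
    then obtain y where "G = Circ y" by blast
    then have "G = range (\<lambda>s. cpt (0 + 1 * s) (y + 0 * s))" using range_line_Circ[of 1 0 y] by simp
    moreover have "loc_isom_immersion (\<lambda>s. cpt (0 + 1 * s) (y + 0 * s))" by (rule line_loc_isom[of 1 0 0 y]) simp
    ultimately show ?thesis unfolding geodesic_def by blast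
  next
    assume "\<exists>x c. G = Hel x c"
    then obtain x c where G: "G = Hel x c" by blast
    define L where "L = sqrt (1 + c\<^sup>2)"
    have L: "L > 0" "L\<^sup>2 = 1 + c\<^sup>2" unfolding L_def by (auto simp: add_pos_nonneg)
    have nz: "1 + c\<^sup>2 \<noteq> 0" using zero_le_power2[of c] by linarith
    have "(c / L)\<^sup>2 + (1 / L)\<^sup>2 = 1" using L nz by (simp add: power_divide add_divide_distrib[symmetric])
    then have li: "loc_isom_immersion (\<lambda>s. cpt (x + (c / L) * s) (0 + (1 / L) * s))" by (rule line_loc_isom[of "c/L" "1/L" x 0])
    have "range (\<lambda>s. cpt (x + (c / L) * s) (0 + (1 / L) * s)) = Hel (x - (c / L) * 0 / (1 / L)) ((c / L) / (1 / L))"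
      by (rule range_line_Hel[of "1/L" x "c/L" 0]) (use L in simp)
    also have "\<dots> = G" using L G by simp
    finally have "range (\<lambda>s. cpt (x + (c / L) * s) (0 + (1 / L) * s)) = G" .
    then show ?thesis using li unfolding geodesic_def by (intro exI[of _ "\<lambda>s. cpt (x + (c / L) * s) (0 + (1 / L) * s)"]) simp
  qed
qed


lemma IntsI_eq: "a \<in> \<int> \<Longrightarrow> a = b \<Longrightarrow> (b::real) \<in> \<int>" by simp

lemma half_not_Int: "(1/2::real) \<notin> \<int>"
proof
  assume "(1/2::real) \<in> \<int>"
  from Ints_nonzero_abs_less1[OF this] show False by simp
qed

lemma additive_nat_mult:
  fixes M :: "real \<Rightarrow> real"
  assumes add: "\<And>x y. M (x + y) = M x + M y"
  shows "M (of_nat n * y) = of_nat n * M y"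
proof (induction n)
  case 0
  have "M 0 = M 0 + M 0" using add[of 0 0] by simp
  then show ?case by simp
next
  case (Suc n)
  have "M (of_nat (Suc n) * y) = M (of_nat n * y + y)" by (simp add: algebra_simps)
  also have "\<dots> = of_nat n * M y + M y" using add Suc by simp
  finally show ?case by (simp add: algebra_simps)
qed

lemma additive_Ints_zero:
  fixes M :: "real \<Rightarrow> real"
  assumes add: "\<And>x y. M (x + y) = M x + M y"
    and int: "\<And>x. M x \<in> \<int>"
  shows "M x = 0"
proof -
  obtain n :: nat where n1: "\<bar>M x\<bar> < real n" using reals_Archimedean2 by blast
  have npos: "real n > 0" using n1 abs_ge_zero[of "M x"] by linarith
  have fm: "M (real n * (x / real n)) = real n * M (x / real n)" by (rule additive_nat_mult[OF add])
  have xn: "real n * (x / real n) = x" using npos by simp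
  have eq: "M x = real n * M (x / real n)" using fm unfolding xn .
  have "real n * \<bar>M (x / real n)\<bar> < real n * 1"
    using n1 npos unfolding eq by (simp add: abs_mult)
  then have lt: "\<bar>M (x / real n)\<bar> < 1" using npos by (rule mult_less_cancel_left_pos[THEN iffD1, rotated])
  have "M (x / real n) = 0" by (rule Ints_nonzero_abs_less1[OF int lt])
  then show ?thesis using eq by simp
qed

lemma ring_hom_real_id:
  fixes g :: "real \<Rightarrow> real"
  assumes add: "\<And>x y. g (x + y) = g x + g y"
    and mult: "\<And>x y. g (x * y) = g x * g y"
    and one: "g 1 = 1"
  shows "g x = x"
proof -
  have g0: "g 0 = 0" using add[of 0 0] by simp
  have gneg: "g (- y) = - g y" for y using add[of y "-y"] g0 by simp
  have gnat: "g (of_nat n) = of_nat n" for n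
    using additive_nat_mult[OF add, of n 1] one by simp
  have gint: "g (of_int k) = of_int k" for k
  proof (cases "k \<ge> 0")
    case True
    then show ?thesis using gnat[of "nat k"] by simp
  next
    case False
    then show ?thesis using gneg[of "of_int (-k)"] gnat[of "nat (-k)"] by simp
  qed
  have grat: "g q = q" if qR: "q \<in> \<rat>" for q
  proof -
    obtain a b where ab: "b > 0" "q = of_int a / of_int b" using Rats_cases'[OF qR] by blast
    have qb: "q * of_int b = of_int a" using ab by simp
    have "g q * of_int b = g (q * of_int b)" using mult gint by simp
    also have "\<dots> = of_int a" unfolding qb by (rule gint)
    finally have "g q * of_int b = q * of_int b" unfolding qb .
    then show ?thesis using ab(1) by simp
  qed
  have gpos: "g y \<ge> 0" if "y \<ge> 0" for y
  proof -
    have "g y = g (sqrt y * sqrt y)" using that by simp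
    also have "\<dots> = (g (sqrt y))\<^sup>2" by (simp only: mult power2_eq_square)
    finally show ?thesis by simp
  qed
  have gmono: "g y \<le> g z" if "y \<le> z" for y z
  proof -
    have "g z = g y + g (z - y)" using add[of y "z - y"] by simp
    then show ?thesis using gpos[of "z - y"] that by simp
  qed
  show ?thesis
  proof (rule ccontr)
    assume "g x \<noteq> x"
    then consider "g x < x" | "x < g x" by linarith
    then show False
    proof cases
      case 1
      then obtain q where q: "q \<in> \<rat>" "g x < q" "q < x" using Rats_dense_in_real by blast
      have "g q \<le> g x" using q by (intro gmono) simp
      then show False using grat[OF q(1)] q by simp
    next
      case 2
      then obtain q where q: "q \<in> \<rat>" "x < q" "q < g x" using Rats_dense_in_real by blast
      have "g x \<le> g q" using q by (intro gmono) simp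
      then show False using grat[OF q(1)] q by simp
    qed
  qed
qed


lemma cpt_Hel: "cpt (x + c * t) t \<in> Hel x c"
  unfolding mem_Hel_cpt by simp

lemma cpt_Circ: "cpt u y \<in> Circ y"
  unfolding mem_Circ by simp

lemma Hel_Circ_inter: "p \<in> Hel x c \<Longrightarrow> p \<in> Circ y \<Longrightarrow> p = cpt (x + c * y) y"
proof -
  assume h: "p \<in> Hel x c" "p \<in> Circ y"
  then have cy: "cy p = y" by (simp add: mem_Circ)
  have "cx p - x - c * cy p \<in> \<int>" using h by (simp add: mem_Hel)
  then have "cx p - (x + c * y) \<in> \<int>" using cy by (simp add: algebra_simps)
  then have "cpt (cx p) (cy p) = cpt (x + c * y) y" using cy by (intro cpt_eqI)
  then show ?thesis by simp
qed

lemma Circ_ne_Hel: "Circ y \<noteq> Hel x c"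
proof
  assume eq: "Circ y = Hel x c"
  have "cpt (x + c * (y + 1)) (y + 1) \<in> Hel x c" by (rule cpt_Hel)
  then have "cpt (x + c * (y + 1)) (y + 1) \<in> Circ y" using eq by simp
  then show False by (simp add: mem_Circ)
qed

lemma Circ_meet: "p \<in> Circ y \<Longrightarrow> p \<in> Circ y' \<Longrightarrow> y = y'"
  by (simp add: mem_Circ)

lemma Hel_par_meet:
  assumes "p \<in> Hel x c" "p \<in> Hel x' c"
  shows "Hel x c = Hel x' c"
proof -
  have a: "cx p - x - c * cy p \<in> \<int>" "cx p - x' - c * cy p \<in> \<int>" using assms by (simp_all add: mem_Hel)
  have d: "x' - x \<in> \<int>"
    by (rule IntsI_eq[OF Ints_diff[OF a(1) a(2)]]) (simp add: algebra_simps)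
  have "q \<in> Hel x c \<longleftrightarrow> q \<in> Hel x' c" for q
  proof -
    have "(cx q - x - c * cy q) - (cx q - x' - c * cy q) \<in> \<int>" using d by (simp add: algebra_simps)
    from Ints_shift[OF this] show ?thesis by (simp add: mem_Hel)
  qed
  then show ?thesis by blast
qed

lemma Hel_meet2:
  assumes "c \<noteq> c'"
  shows "\<exists>p q. p \<noteq> q \<and> p \<in> Hel x c \<and> p \<in> Hel x' c' \<and> q \<in> Hel x c \<and> q \<in> Hel x' c'"
proof -
  define t where "t = (x' - x) / (c - c')"
  define u where "u = 1 / (c - c')"
  define t' where "t' = t + u"
  have d: "c - c' \<noteq> 0" using assms by simp
  have 1: "cpt (x + c * t) t \<in> Hel x' c'"
  proof -
    have dt: "(c - c') * t = x' - x" using d unfolding t_def by simp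
    have "x + c * t - x' - c' * t = (x - x') + (c - c') * t" by (simp add: algebra_simps)
    also have "\<dots> = 0" unfolding dt by simp
    finally have "x + c * t - x' - c' * t = 0" .
    then show ?thesis unfolding mem_Hel_cpt by simp
  qed
  have 2: "cpt (x + c * t') t' \<in> Hel x' c'"
  proof -
    have dt: "(c - c') * t = x' - x" using d unfolding t_def by simp
    have dt1: "(c - c') * u = 1" using d unfolding u_def by simp
    have "x + c * t' - x' - c' * t' = (x - x') + (c - c') * t + (c - c') * u"
      unfolding t'_def by (simp add: algebra_simps)
    also have "\<dots> = 1" unfolding dt dt1 by simp
    finally have "x + c * t' - x' - c' * t' = 1" .
    then show ?thesis unfolding mem_Hel_cpt by simp
  qed
  have ne: "cpt (x + c * t) t \<noteq> cpt (x + c * t') t'"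
  proof
    assume "cpt (x + c * t) t = cpt (x + c * t') t'"
    then have "t = t'" by (simp add: cpt_eq_iff)
    then show False using d unfolding t'_def u_def by simp
  qed
  show ?thesis using ne 1 2 cpt_Hel[of x c t] cpt_Hel[of x c t'] by blast
qed

lemma Hel_meet: "c \<noteq> c' \<Longrightarrow> \<exists>p. p \<in> Hel x c \<and> p \<in> Hel x' c'"
  using Hel_meet2 by blast

lemma Hel_slope_eq:
  assumes eq: "Hel x c = Hel x' c'"
  shows "c = c'"
proof (rule ccontr)
  assume ne: "c \<noteq> c'"
  have "cpt (x + c * 0) 0 \<in> Hel x' c'" using eq cpt_Hel[of x c 0] by simp
  then have i1: "x - x' \<in> \<int>" unfolding mem_Hel_cpt by simp
  define t where "t = 1 / (2 * (c - c'))"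
  have "cpt (x + c * t) t \<in> Hel x' c'" using eq cpt_Hel[of x c t] by simp
  then have i2: "x + c * t - x' - c' * t \<in> \<int>" unfolding mem_Hel_cpt .
  have dt: "(c - c') * t = 1/2" using ne unfolding t_def by simp
  have "(x + c * t - x' - c' * t) - (x - x') = (c - c') * t" by (simp add: algebra_simps)
  then have eq12: "(x + c * t - x' - c' * t) - (x - x') = 1/2" unfolding dt .
  have "(1/2::real) \<in> \<int>" using Ints_diff[OF i2 i1] unfolding eq12 .
  then show False using half_not_Int by simp
qed


lemma algebra_main:
  fixes F \<psi> :: "real \<Rightarrow> real \<Rightarrow> real" and \<sigma> h :: "real \<Rightarrow> real"
  assumes E: "\<And>x c t. F (x + c * t) t - \<psi> x c - \<sigma> c * h t \<in> \<int>"
    and per: "\<And>u v. F (u + 1) v = F u v"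
    and hsurj: "surj h" and hinj: "inj h" and sinj: "inj \<sigma>"
    and finj: "\<And>u u' v. F u v - F u' v \<in> \<int> \<Longrightarrow> u - u' \<in> \<int>"
  shows "\<exists>l \<alpha> \<beta> A B. (l = 1 \<or> l = -1) \<and> A \<noteq> 0 \<and>
           (\<forall>u v. F u v - (l * u + \<alpha> * v + \<beta>) \<in> \<int>) \<and> (\<forall>v. h v = A * v + B)"
proof -
  define \<phi> where "\<phi> x = \<psi> x 0" for x
  define s0 where "s0 = \<sigma> 0"
  define \<tau> where "\<tau> c = \<sigma> c - s0" for c
  define H where "H t = h t - h 0" for t
  have E1: "F u t - \<phi> u - s0 * h t \<in> \<int>" for u t using E[of u 0 t] by (simp add: \<phi>_def s0_def)
  have E': "\<phi> (x + c * t) - \<phi> x - \<tau> c * H t \<in> \<int>" for x c t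
  proof -
    have a: "F (x + c * t) t - \<psi> x c - \<sigma> c * h t \<in> \<int>" by (rule E)
    have b: "F (x + c * t) t - \<phi> (x + c * t) - s0 * h t \<in> \<int>" by (rule E1)
    have c: "F x 0 - \<psi> x c - \<sigma> c * h 0 \<in> \<int>" using E[of x c 0] by simp
    have d: "F x 0 - \<phi> x - s0 * h 0 \<in> \<int>" by (rule E1)
    show ?thesis
      by (rule IntsI_eq[OF Ints_diff[OF Ints_diff[OF a b] Ints_diff[OF c d]]])
         (simp add: \<tau>_def H_def algebra_simps)
  qed
  have E0: "\<phi> (c * t) - \<phi> 0 - \<tau> c * H t \<in> \<int>" for c t using E'[of 0 c t] by simp
  have tadd: "\<tau> (c + c') = \<tau> c + \<tau> c'" for c c'
  proof -
    define r where "r = \<tau> (c + c') - \<tau> c - \<tau> c'"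
    have rH: "r * H t \<in> \<int>" for t
    proof -
      have a: "\<phi> ((c + c') * t) - \<phi> 0 - \<tau> (c + c') * H t \<in> \<int>" by (rule E0)
      have b: "\<phi> (c * t + c' * t) - \<phi> (c * t) - \<tau> c' * H t \<in> \<int>" by (rule E')
      have c: "\<phi> (c * t) - \<phi> 0 - \<tau> c * H t \<in> \<int>" by (rule E0)
      show ?thesis
        by (rule IntsI_eq[OF Ints_diff[OF Ints_add[OF c b] a]]) (simp add: r_def algebra_simps)
    qed
    show ?thesis
    proof (rule ccontr)
      assume "\<tau> (c + c') \<noteq> \<tau> c + \<tau> c'"
      then have r: "r \<noteq> 0" by (simp add: r_def)
      obtain t where t: "h 0 + 1 / (2 * r) = h t" using hsurj by (metis surj_def)
      have "H t = 1 / (2 * r)" using t[symmetric] by (simp add: H_def)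
      then have rh: "r * H t = 1/2" using r by simp
      have "(1/2::real) \<in> \<int>" using rH[of t] unfolding rh .
      then show False using half_not_Int by blast
    qed
  qed
  have t1: "\<tau> 1 \<noteq> 0"
  proof
    assume "\<tau> 1 = 0"
    then have "\<sigma> 1 = \<sigma> 0" by (simp add: \<tau>_def s0_def)
    then show False using sinj by (metis injD zero_neq_one)
  qed
  define A where "A = H 1"
  have A: "A \<noteq> 0"
  proof
    assume "A = 0"
    then have "h 1 = h 0" by (simp add: A_def H_def)
    then show False using hinj by (metis injD zero_neq_one)
  qed
  have Hadd: "H (t + t') = H t + H t'" for t t'
  proof -
    define D where "D = H (t + t') - H t - H t'"
    define M where "M c = \<tau> c * D" for c
    have Ma: "M (x + y) = M x + M y" for x y by (simp add: M_def tadd algebra_simps)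
    have Mi: "M c \<in> \<int>" for c
    proof -
      have a: "\<phi> (c * (t + t')) - \<phi> 0 - \<tau> c * H (t + t') \<in> \<int>" by (rule E0)
      have b: "\<phi> (c * t + c * t') - \<phi> (c * t) - \<tau> c * H t' \<in> \<int>" by (rule E')
      have c: "\<phi> (c * t) - \<phi> 0 - \<tau> c * H t \<in> \<int>" by (rule E0)
      show ?thesis
        by (rule IntsI_eq[OF Ints_diff[OF Ints_add[OF b c] a]]) (simp add: M_def D_def algebra_simps)
    qed
    have "M 1 = 0" by (rule additive_Ints_zero[OF Ma Mi])
    then have "D = 0" using t1 by (simp add: M_def)
    then show ?thesis by (simp add: D_def)
  qed
  have Hsym: "\<tau> c * H t = \<tau> t * H c" for c t
  proof -
    define M where "M c = \<tau> c * H t - \<tau> t * H c" for c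
    have Ma: "M (x + y) = M x + M y" for x y by (simp add: M_def tadd Hadd algebra_simps)
    have Mi: "M c \<in> \<int>" for c
    proof -
      have a: "\<phi> (c * t) - \<phi> 0 - \<tau> c * H t \<in> \<int>" by (rule E0)
      have b: "\<phi> (t * c) - \<phi> 0 - \<tau> t * H c \<in> \<int>" by (rule E0)
      show ?thesis
        by (rule IntsI_eq[OF Ints_diff[OF b a]]) (simp add: M_def algebra_simps)
    qed
    have "M c = 0" by (rule additive_Ints_zero[OF Ma Mi])
    then show ?thesis by (simp add: M_def)
  qed
  define \<kappa> where "\<kappa> = \<tau> 1 / A"
  have k: "\<kappa> \<noteq> 0" using t1 A by (simp add: \<kappa>_def)
  have tH: "\<tau> c = \<kappa> * H c" for c
  proof -
    have "\<tau> c * A = \<tau> 1 * H c" using Hsym[of c 1] by (simp add: A_def)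
    then show ?thesis using A by (simp add: \<kappa>_def field_simps)
  qed
  have Hmult: "H (c * t) * A = H c * H t" for c t
  proof -
    define M where "M c = \<kappa> * (H c * H t - H (c * t) * A)" for c
    have Ma: "M (x + y) = M x + M y" for x y by (simp add: M_def Hadd distrib_right algebra_simps)
    have Mi: "M c \<in> \<int>" for c
    proof -
      have a: "\<phi> (c * t) - \<phi> 0 - \<tau> c * H t \<in> \<int>" by (rule E0)
      have b: "\<phi> ((c * t) * 1) - \<phi> 0 - \<tau> (c * t) * H 1 \<in> \<int>" by (rule E0)
      show ?thesis
        by (rule IntsI_eq[OF Ints_diff[OF b a]]) (simp add: M_def tH A_def algebra_simps)
    qed
    have "M c = 0" by (rule additive_Ints_zero[OF Ma Mi])
    then show ?thesis using k by (simp add: M_def)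
  qed
  have Hlin: "H x = A * x" for x
  proof -
    define g where "g x = H x / A" for x
    have "g x = x"
    proof (rule ring_hom_real_id)
      show "g (x + y) = g x + g y" for x y by (simp add: g_def Hadd add_divide_distrib)
      show "g (x * y) = g x * g y" for x y
      proof -
        have "H (x * y) = H x * H y / A" using Hmult[of x y] A by (simp add: field_simps)
        then show ?thesis using A by (simp add: g_def power2_eq_square)
      qed
      show "g 1 = 1" using A by (simp add: g_def A_def)
    qed
    then show ?thesis using A by (simp add: g_def field_simps)
  qed
  have hform: "h v = A * v + h 0" for v using Hlin[of v] by (simp add: H_def)
  define l where "l = \<tau> 1 * A"
  have philin: "\<phi> c - \<phi> 0 - l * c \<in> \<int>" for c
  proof -
    have a: "\<phi> (c * 1) - \<phi> 0 - \<tau> c * H 1 \<in> \<int>" by (rule E0)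
    have "\<tau> c * H 1 = l * c" using Hsym[of c 1] Hlin[of c] by (simp add: l_def A_def)
    then show ?thesis using a by simp
  qed
  have lint: "l \<in> \<int>"
  proof -
    have a: "F 1 0 - \<phi> 1 - s0 * h 0 \<in> \<int>" by (rule E1)
    have b: "F 0 0 - \<phi> 0 - s0 * h 0 \<in> \<int>" by (rule E1)
    have F10: "F 1 0 = F 0 0" using per[of 0 0] by simp
    have c: "\<phi> 1 - \<phi> 0 - l * 1 \<in> \<int>" by (rule philin)
    show ?thesis
      by (rule IntsI_eq[OF Ints_diff[OF Ints_diff[OF b a] c]]) (simp add: F10 algebra_simps)
  qed
  define \<alpha> where "\<alpha> = s0 * A"
  define \<beta> where "\<beta> = \<phi> 0 + s0 * h 0"
  have Fform: "F u v - (l * u + \<alpha> * v + \<beta>) \<in> \<int>" for u v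
  proof -
    have a: "F u v - \<phi> u - s0 * h v \<in> \<int>" by (rule E1)
    have b: "\<phi> u - \<phi> 0 - l * u \<in> \<int>" by (rule philin)
    show ?thesis
      by (rule IntsI_eq[OF Ints_add[OF a b]]) (simp add: \<alpha>_def \<beta>_def hform[of v] algebra_simps)
  qed
  have Fdiff: "F u 0 - F u' 0 \<in> \<int>" if "l * u - l * u' \<in> \<int>" for u u'
  proof -
    have a: "F u 0 - (l * u + \<alpha> * 0 + \<beta>) \<in> \<int>" by (rule Fform)
    have b: "F u' 0 - (l * u' + \<alpha> * 0 + \<beta>) \<in> \<int>" by (rule Fform)
    show ?thesis
      by (rule IntsI_eq[OF Ints_add[OF Ints_diff[OF a b] that]]) (simp add: algebra_simps)
  qed
  have l0: "l \<noteq> 0"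
  proof
    assume "l = 0"
    then have "F (1/2) 0 - F 0 0 \<in> \<int>" using Fdiff[of "1/2" 0] by simp
    then have "(1/2::real) - 0 \<in> \<int>" by (rule finj)
    then show False using half_not_Int by simp
  qed
  have l2: "\<bar>l\<bar> < 2"
  proof (rule ccontr)
    assume "\<not> \<bar>l\<bar> < 2"
    then have l2: "\<bar>l\<bar> \<ge> 2" by simp
    have "l * (1 / l) - l * 0 = 1" using l0 by simp
    then have "F (1 / l) 0 - F 0 0 \<in> \<int>" using Fdiff[of "1/l" 0] by simp
    then have "1 / l - 0 \<in> \<int>" by (rule finj)
    then have i: "1 / l \<in> \<int>" by simp
    have "\<bar>1 / l\<bar> < 1" using l2 by (simp add: abs_div_pos)
    then have "1 / l = 0" using Ints_nonzero_abs_less1[OF i] by simp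
    then show False using l0 by simp
  qed
  have lpm: "l = 1 \<or> l = -1"
  proof -
    obtain k where k: "l = of_int k" using lint by (auto elim: Ints_cases)
    have "k \<noteq> 0" "\<bar>k\<bar> < 2" using l0 l2 k by auto
    then have "k = 1 \<or> k = -1" by arith
    then show ?thesis using k by auto
  qed
  show ?thesis using lpm A Fform hform by blast
qed


lemma pm1_Ints: "l = 1 \<or> l = -1 \<Longrightarrow> (l::real) \<in> \<int>" by auto

lemma pm1_sq: "l = 1 \<or> l = -1 \<Longrightarrow> (l::real) * l = 1" by auto

lemma decomp:
  fixes f :: "cyl \<Rightarrow> cyl"
  assumes l: "l = 1 \<or> l = -1" and A: "A \<noteq> 0"
    and fe: "\<And>p. f p = cpt (l * cx p + \<alpha> * cy p + \<beta>) (A * cy p + B)"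
  shows "\<exists>g a b \<alpha>. cyl_isometry g \<and> a \<noteq> 0 \<and> f = g \<circ> affine_R a b \<circ> twist \<alpha>"
proof -
  have lI: "l \<in> \<int>" using l by (rule pm1_Ints)
  have ll: "l * l = 1" using l by (rule pm1_sq)
  have lll: "l * (l * x) = x" for x using ll by (metis mult.assoc mult_1)
  define g where "g r = cpt (l * cx r + \<beta>) (cy r)" for r
  define g' where "g' r = cpt (l * (cx r - \<beta>)) (cy r)" for r
  have gg': "g (g' r) = r" for r
  proof -
    define y where "y = l * (cx r - \<beta>)"
    have "l * (frac y - y) \<in> \<int>" using lI frac_diff_Ints[of y] by (rule Ints_mult)
    moreover have "l * (frac y - y) = l * frac y + \<beta> - cx r"
      unfolding y_def using ll by (simp add: algebra_simps)
    ultimately have "l * frac y + \<beta> - cx r \<in> \<int>" by simp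
    then have "cpt (l * frac y + \<beta>) (cy r) = cpt (cx r) (cy r)" by (intro cpt_eqI) simp_all
    then show ?thesis by (simp add: g_def g'_def y_def)
  qed
  have g'g: "g' (g r) = r" for r
  proof -
    define z where "z = l * cx r + \<beta>"
    have "l * (frac z - z) \<in> \<int>" using lI frac_diff_Ints[of z] by (rule Ints_mult)
    moreover have "l * (frac z - z) = l * (frac z - \<beta>) - cx r"
      unfolding z_def using ll by (simp add: algebra_simps)
    ultimately have "l * (frac z - \<beta>) - cx r \<in> \<int>" by simp
    then have "cpt (l * (frac z - \<beta>)) (cy r) = cpt (cx r) (cy r)" by (intro cpt_eqI) simp_all
    then show ?thesis by (simp add: g_def g'_def z_def)
  qed
  have bij: "bij g" by (rule o_bij[of g' g]) (auto simp: gg' g'g)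
  have dist: "cdist (g p) (g q) = cdist p q" for p q
  proof -
    have "dn (l * cx p + \<beta> - (l * cx q + \<beta>)) = dn (cx p - cx q)"
      using l
    proof
      assume "l = 1" then show ?thesis by simp
    next
      assume "l = -1"
      then have eqm: "l * cx p + \<beta> - (l * cx q + \<beta>) = - (cx p - cx q)" by simp
      show ?thesis unfolding eqm by (rule dn_minus)
    qed
    then show ?thesis unfolding g_def cdist_cpt cdist_formula[of p q] by simp
  qed
  have iso: "cyl_isometry g" unfolding cyl_isometry_def using bij dist by blast
  have feq: "f = g \<circ> affine_R A B \<circ> twist (l * \<alpha>)"
  proof
    fix p
    define w where "w = cx p + l * \<alpha> * cy p"
    have rhs: "(g \<circ> affine_R A B \<circ> twist (l * \<alpha>)) p = cpt (l * frac (frac w) + \<beta>) (A * cy p + B)"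
      by (simp add: g_def affine_R_def twist_def w_def)
    have "l * (frac (frac w) - w) \<in> \<int>"
    proof (rule Ints_mult[OF lI])
      have "(frac (frac w) - frac w) + (frac w - w) \<in> \<int>" by (intro Ints_add frac_diff_Ints)
      then show "frac (frac w) - w \<in> \<int>" by simp
    qed
    then have "- (l * (frac (frac w) - w)) \<in> \<int>" by (rule Ints_minus)
    moreover have "- (l * (frac (frac w) - w)) = (l * cx p + \<alpha> * cy p + \<beta>) - (l * frac (frac w) + \<beta>)"
      unfolding w_def using lll by (simp add: algebra_simps)
    ultimately have "(l * cx p + \<alpha> * cy p + \<beta>) - (l * frac (frac w) + \<beta>) \<in> \<int>" by (rule IntsI_eq)
    then have "cpt (l * cx p + \<alpha> * cy p + \<beta>) (A * cy p + B) = cpt (l * frac (frac w) + \<beta>) (A * cy p + B)"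
      by (intro cpt_eqI) simp_all
    then show "f p = (g \<circ> affine_R A B \<circ> twist (l * \<alpha>)) p" unfolding rhs fe .
  qed
  show ?thesis using iso A feq by blast
qed


lemma inj_img_meet:
  assumes "inj f" "p \<in> f ` A" "p \<in> f ` B"
  shows "\<exists>q. q \<in> A \<and> q \<in> B \<and> p = f q"
proof -
  obtain a b where "a \<in> A" "b \<in> B" "p = f a" "p = f b" using assms(2,3) by blast
  then show ?thesis using assms(1) by (metis injD)
qed

lemma q0_mem: "cpt (x + c * 0) 0 \<in> Hel x c" "cpt (x + c * 0) 0 \<in> Circ 0"
  by (rule cpt_Hel) (rule cpt_Circ)

theorem main_thm:
  fixes f :: "cyl \<Rightarrow> cyl"
  assumes "geodesic_preserving f"
  shows "\<exists>g a b \<alpha>. cyl_isometry g \<and> a \<noteq> 0 \<and> f = g \<circ> affine_R a b \<circ> twist \<alpha>"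
proof -
  have bij: "bij f" and gpG: "\<And>G. geodesic G \<Longrightarrow> geodesic (f ` G)"
    using assms unfolding geodesic_preserving_def by auto
  have inj: "inj f" and surj: "surj f" using bij by (auto simp: bij_def)
  have imgeq: "f ` A = f ` B \<Longrightarrow> A = B" for A B using inj by (simp add: inj_image_eq_iff)
  have imgC: "(\<exists>z. f ` Circ y = Circ z) \<or> (\<exists>x c. f ` Circ y = Hel x c)" for y
    using gpG[of "Circ y"] geodesic_iff by blast
  have imgH: "(\<exists>z. f ` Hel x c = Circ z) \<or> (\<exists>x' c'. f ` Hel x c = Hel x' c')" for x c
    using gpG[of "Hel x c"] geodesic_iff by blast
  have C: "\<exists>z. f ` Circ y = Circ z" for y
  proof (rule ccontr)
    assume ny: "\<not> (\<exists>z. f ` Circ y = Circ z)"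
    then obtain x1 c1 where h1: "f ` Circ y = Hel x1 c1" using imgC[of y] by blast
    have par: "\<exists>x. f ` Circ y' = Hel x c1" for y'
    proof (cases "y' = y")
      case True then show ?thesis using h1 by blast
    next
      case False
      have disj: "\<not> (p \<in> f ` Circ y' \<and> p \<in> f ` Circ y)" for p
      proof
        assume "p \<in> f ` Circ y' \<and> p \<in> f ` Circ y"
        then obtain q where "q \<in> Circ y'" "q \<in> Circ y" using inj_img_meet[OF inj] by blast
        then show False using False Circ_meet by blast
      qed
      from imgC[of y'] show ?thesis
      proof
        assume "\<exists>z. f ` Circ y' = Circ z"
        then obtain z where z: "f ` Circ y' = Circ z" by blast
        have "cpt (x1 + c1 * z) z \<in> Circ z" "cpt (x1 + c1 * z) z \<in> Hel x1 c1"
          by (rule cpt_Circ) (rule cpt_Hel)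
        then show ?thesis using disj z h1 by blast
      next
        assume "\<exists>x c. f ` Circ y' = Hel x c"
        then obtain x c where xc: "f ` Circ y' = Hel x c" by blast
        have "c = c1"
        proof (rule ccontr)
          assume "c \<noteq> c1"
          then obtain p where "p \<in> Hel x c" "p \<in> Hel x1 c1" using Hel_meet by blast
          then show False using disj xc h1 by blast
        qed
        then show ?thesis using xc by blast
      qed
    qed
    have Hcirc: "\<exists>z. f ` Hel x c = Circ z" for x c
    proof -
      obtain x' where x': "f ` Circ 0 = Hel x' c1" using par[of 0] by blast
      from imgH[of x c] show ?thesis
      proof
        assume "\<exists>x2 c2. f ` Hel x c = Hel x2 c2"
        then obtain x2 c2 where h2: "f ` Hel x c = Hel x2 c2" by blast
        have False
        proof (cases "c2 = c1")
          case True
          have "f (cpt (x + c * 0) 0) \<in> Hel x2 c2" "f (cpt (x + c * 0) 0) \<in> Hel x' c1"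
            using h2 x' q0_mem[of x c] by (auto simp del: mult_zero_right add_0_right)
          then have "Hel x2 c2 = Hel x' c1" using True Hel_par_meet by blast
          then have "Hel x c = Circ 0" using h2 x' imgeq by metis
          then show False using Circ_ne_Hel by metis
        next
          case False
          obtain p q where pq: "p \<noteq> q" "p \<in> Hel x2 c2" "p \<in> Hel x' c1" "q \<in> Hel x2 c2" "q \<in> Hel x' c1"
            using Hel_meet2[OF False] by blast
          obtain a where a: "a \<in> Hel x c" "a \<in> Circ 0" "p = f a"
            using inj_img_meet[OF inj, of p "Hel x c" "Circ 0"] pq h2 x' by blast
          obtain b where b: "b \<in> Hel x c" "b \<in> Circ 0" "q = f b"
            using inj_img_meet[OF inj, of q "Hel x c" "Circ 0"] pq h2 x' by blast
          have "a = b" using Hel_Circ_inter[OF a(1,2)] Hel_Circ_inter[OF b(1,2)] by simp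
          then show False using pq a b by simp
        qed
        then show ?thesis ..
      qed
    qed
    obtain z1 where z1: "f ` Hel 0 0 = Circ z1" using Hcirc by blast
    obtain z2 where z2: "f ` Hel 0 1 = Circ z2" using Hcirc by blast
    have m: "cpt 0 0 \<in> Hel 0 0" "cpt 0 0 \<in> Hel 0 1" by (simp_all add: mem_Hel_cpt)
    have "f (cpt 0 0) \<in> Circ z1" "f (cpt 0 0) \<in> Circ z2" using z1 z2 m by blast+
    then have "z1 = z2" by (rule Circ_meet)
    then have "Hel 0 0 = Hel 0 (1::real)" using z1 z2 imgeq by metis
    then have "(0::real) = 1" by (rule Hel_slope_eq)
    then show False by simp
  qed
  then obtain h where hC: "\<And>y. f ` Circ y = Circ (h y)" by metis
  have hcy: "cy (f (cpt u v)) = h v" for u v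
  proof -
    have "f (cpt u v) \<in> f ` Circ v" using cpt_Circ by blast
    then show ?thesis unfolding hC by (simp add: mem_Circ)
  qed
  have hcy': "cy (f p) = h (cy p)" for p using hcy[of "cx p" "cy p"] by simp
  have hsurj: "surj h"
  proof -
    have "z \<in> range h" for z
    proof -
      obtain p where p: "cpt 0 z = f p" using surj by (metis surjD)
      have "z = h (cy p)" using hcy'[of p] p[symmetric] by simp
      then show ?thesis by blast
    qed
    then show ?thesis by blast
  qed
  have hinj: "inj h"
  proof (rule injI)
    fix y y' assume "h y = h y'"
    then have "Circ y = Circ y'" using hC imgeq by metis
    then have "cpt 0 y \<in> Circ y'" using cpt_Circ by blast
    then show "y = y'" by (simp add: mem_Circ)
  qed
  have HH: "\<exists>x' c'. f ` Hel x c = Hel x' c'" for x c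
  proof -
    from imgH[of x c] show ?thesis
    proof
      assume "\<exists>z. f ` Hel x c = Circ z"
      then obtain z where z: "f ` Hel x c = Circ z" by blast
      have "f (cpt (x + c * 0) 0) \<in> Circ z" "f (cpt (x + c * 0) 0) \<in> Circ (h 0)"
        using z hC[of 0] q0_mem[of x c] by (auto simp del: mult_zero_right add_0_right)
      then have "z = h 0" by (rule Circ_meet)
      then have "Hel x c = Circ 0" using z hC[of 0] imgeq by metis
      then show ?thesis using Circ_ne_Hel by metis
    qed
  qed
  then obtain \<psi>0 \<sigma>' where hH: "\<And>x c. f ` Hel x c = Hel (\<psi>0 x c) (\<sigma>' x c)" by metis
  have sind: "\<sigma>' x c = \<sigma>' 0 c" for x c
  proof (rule ccontr)
    assume ne: "\<sigma>' x c \<noteq> \<sigma>' 0 c"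
    obtain p where "p \<in> Hel (\<psi>0 x c) (\<sigma>' x c)" "p \<in> Hel (\<psi>0 0 c) (\<sigma>' 0 c)" using Hel_meet[OF ne] by blast
    then obtain q where "q \<in> Hel x c" "q \<in> Hel 0 c" using inj_img_meet[OF inj] hH by metis
    then have "Hel x c = Hel 0 c" by (rule Hel_par_meet)
    then have "Hel (\<psi>0 x c) (\<sigma>' x c) = Hel (\<psi>0 0 c) (\<sigma>' 0 c)" using hH by metis
    then show False using ne Hel_slope_eq by blast
  qed
  define \<sigma> where "\<sigma> c = \<sigma>' 0 c" for c
  have hH2: "f ` Hel x c = Hel (\<psi>0 x c) (\<sigma> c)" for x c unfolding \<sigma>_def sind[of x c, symmetric] by (rule hH)
  have sinj: "inj \<sigma>"
  proof (rule injI)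
    fix c c' assume eq: "\<sigma> c = \<sigma> c'"
    have m: "cpt 0 0 \<in> Hel 0 c" "cpt 0 0 \<in> Hel 0 c'" by (simp_all add: mem_Hel_cpt)
    have "f (cpt 0 0) \<in> Hel (\<psi>0 0 c) (\<sigma> c)" "f (cpt 0 0) \<in> Hel (\<psi>0 0 c') (\<sigma> c)"
      using hH2[of 0 c] hH2[of 0 c'] m eq by auto
    then have "Hel (\<psi>0 0 c) (\<sigma> c) = Hel (\<psi>0 0 c') (\<sigma> c)" by (rule Hel_par_meet)
    then have "f ` Hel 0 c = f ` Hel 0 c'" using hH2 eq by metis
    then have "Hel 0 c = Hel 0 c'" by (rule imgeq)
    then show "c = c'" by (rule Hel_slope_eq)
  qed
  define F where "F u v = cx (f (cpt u v))" for u v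
  have fF: "f (cpt u v) = cpt (F u v) (h v)" for u v
    using cpt_cx_cy[of "f (cpt u v)"] hcy[of u v] by (simp add: F_def)
  have E: "F (x + c * t) t - \<psi>0 x c - \<sigma> c * h t \<in> \<int>" for x c t
  proof -
    have "f (cpt (x + c * t) t) \<in> Hel (\<psi>0 x c) (\<sigma> c)" using hH2[of x c] cpt_Hel[of x c t] by blast
    then show ?thesis by (simp add: mem_Hel F_def hcy)
  qed
  have per: "F (u + 1) v = F u v" for u v
  proof -
    have "cpt (u + 1) v = cpt u v" by (simp add: cpt_eq_iff)
    then show ?thesis by (simp add: F_def)
  qed
  have finj: "u - u' \<in> \<int>" if "F u v - F u' v \<in> \<int>" for u u' v
  proof -
    have fe: "f (cpt u v) = f (cpt u' v)" unfolding fF using that by (simp add: cpt_eq_iff)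
    have "cpt u v = cpt u' v" by (rule injD[OF inj fe])
    then show ?thesis by (simp add: cpt_eq_iff)
  qed
  have ex: "\<exists>l \<alpha> \<beta> A B. (l = 1 \<or> l = -1) \<and> A \<noteq> 0 \<and>
           (\<forall>u v. F u v - (l * u + \<alpha> * v + \<beta>) \<in> \<int>) \<and> (\<forall>v. h v = A * v + B)"
    by (rule algebra_main[of F \<psi>0 \<sigma> h, OF E per hsurj hinj sinj finj])
  then obtain l \<alpha> \<beta> A B where lab0: "l = 1 \<or> l = -1" "A \<noteq> 0"
    "\<forall>u v. F u v - (l * u + \<alpha> * v + \<beta>) \<in> \<int>" "\<forall>v. h v = A * v + B"
    by (elim exE conjE)
  note lab = lab0(1,2) lab0(3)[rule_format] lab0(4)[rule_format]
  have fe: "f p = cpt (l * cx p + \<alpha> * cy p + \<beta>) (A * cy p + B)" for p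
  proof -
    have "f p = f (cpt (cx p) (cy p))" by simp
    also have "\<dots> = cpt (F (cx p) (cy p)) (h (cy p))" by (rule fF)
    also have "\<dots> = cpt (l * cx p + \<alpha> * cy p + \<beta>) (A * cy p + B)"
      using lab(3)[of "cx p" "cy p"] lab(4)[of "cy p"] by (simp add: cpt_eq_iff)
    finally show ?thesis .
  qed
  show ?thesis by (rule decomp[OF lab(1,2) fe])
qed


theorem theorem4p1:
  fixes f :: "cyl \<Rightarrow> cyl"
  assumes "geodesic_preserving f"
  shows "\<exists>g a b \<alpha>. cyl_isometry g \<and> a \<noteq> 0 \<and> f = g \<circ> affine_R a b \<circ> twist \<alpha>"
  by (rule main_thm[OF assms])

end
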